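(* Let $(\mathcal G,\lambda)$ be a small morphism-colored groupoid satisfying the inverse-compatibility condition. If $g,f_1,f_2\in\mathrm{Mor}(\mathcal G)$, with $(f_1,f_2)$ composable, satisfy $(s_1\circ\lambda_1)(g)=(s_1\circ\lambda_1)(f_1\circ f_2)$, then there exist composable $g_1,g_2\in\mathrm{Mor}(\mathcal G)$ with $g=g_1\circ g_2$, $(s_1\circ\lambda_1)(g_1)=(s_1\circ\lambda_1)(f_1)$ and $(s_1\circ\lambda_1)(g_2)=(s_1\circ\lambda_1)(f_2)$. In other words, $(\mathcal G,s_1\circ\lambda_1)$ is a morphism-colored category.
   Context: A morphism-colored category is a pair $(\mathcal C,\lambda)$ where $\mathcal C$ is a category and $\lambda$ assigns to each morphism $f$ a color $\lambda(f)$, such that: whenever $g,f_1,f_2$ with $(f_1,f_2)$ composable satisfy $\lambda(g)=\lambda(f_1\circ f_2)$, there exist composable $g_1,g_2$ with $g=g_1\circ g_2$, $\lambda(g_1)=\lambda(f_1)$, $\lambda(g_2)=\lambda(f_2)$. It is a morphism-colored groupoid if $\mathcal C$ is a groupoid, and small if $\mathcal C$ is small and $\lambda$ is a map into a set. Inverse-compatibility: $\lambda(f)=\lambda(g)$ implies $\lambda(f^{-1})=\lambda(g^{-1})$. $I_1=\lambda(\mathrm{Mor}(\mathcal G))$, $\lambda_1:\mathrm{Mor}(\mathcal G)\to I_1$ the corestriction of $\lambda$. The equivalence relation $\overset{1}{\sim}$ on $I_1$: $\lambda(f_1\circ\cdots\circ f_l)\overset{1}{\sim}\lambda(g_1\circ\cdots\circ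 g_l)$ for every $l\ge1$ and all composable sequences $(f_1,\dots,f_l)$, $(g_1,\dots,g_l)$ with $\lambda(f_i)=\lambda(g_i)$ for all $i$ (no other pairs). $s_1:I_1\to\bar I_1$ is the quotient map onto the set $\bar I_1$ of equivalence classes. *)

theory Defs
  imports Main
begin

text \<open>A small category, given explicitly by its set of objects, set of morphisms,
  domain, codomain, composition and identities.  comp f g is f after g, defined
  (composable) when dom f = cod g.\<close>

record ('o, 'm) cat =
  Ob :: "'o set"
  Mor :: "'m set"
  dom :: "'m \<Rightarrow> 'o"
  cod :: "'m \<Rightarrow> 'o"
  comp :: "'m \<Rightarrow> 'm \<Rightarrow> 'm"
  ident :: "'o \<Rightarrow> 'm"

definition composable :: "('o, 'm, 'x) cat_scheme \<Rightarrow> 'm \<Rightarrow> 'm \<Rightarrow> bool" where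
  "composable C f g \<longleftrightarrow> f \<in> Mor C \<and> g \<in> Mor C \<and> dom C f = cod C g"

definition category :: "('o, 'm, 'x) cat_scheme \<Rightarrow> bool" where
  "category C \<longleftrightarrow>
     (\<forall>f\<in>Mor C. dom C f \<in> Ob C \<and> cod C f \<in> Ob C) \<and>
     (\<forall>a\<in>Ob C. ident C a \<in> Mor C \<and> dom C (ident C a) = a \<and> cod C (ident C a) = a) \<and>
     (\<forall>f g. composable C f g \<longrightarrow>
        comp C f g \<in> Mor C \<and> dom C (comp C f g) = dom C g \<and> cod C (comp C f g) = cod C f) \<and>
     (\<forall>f\<in>Mor C. comp C (ident C (cod C f)) f = f \<and> comp C f (ident C (dom C f)) = f) \<and>
     (\<forall>f g h. composable C f g \<longrightarrow> composable C g h \<longrightarrow>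
        comp C (comp C f g) h = comp C f (comp C g h))"

definition is_inverse :: "('o, 'm, 'x) cat_scheme \<Rightarrow> 'm \<Rightarrow> 'm \<Rightarrow> bool" where
  "is_inverse C f g \<longleftrightarrow> g \<in> Mor C \<and> dom C g = cod C f \<and> cod C g = dom C f \<and>
     comp C g f = ident C (dom C f) \<and> comp C f g = ident C (cod C f)"

definition groupoid :: "('o, 'm, 'x) cat_scheme \<Rightarrow> bool" where
  "groupoid C \<longleftrightarrow> category C \<and> (\<forall>f\<in>Mor C. \<exists>g. is_inverse C f g)"

definition ginv :: "('o, 'm, 'x) cat_scheme \<Rightarrow> 'm \<Rightarrow> 'm" where
  "ginv C f = (THE g. is_inverse C f g)"

text \<open>Morphism-colored category: colorings are arbitrary maps from morphisms into a type
  (i.e. into a set), only their values on Mor C matter.\<close>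
definition morph_colored :: "('o, 'm, 'x) cat_scheme \<Rightarrow> ('m \<Rightarrow> 'c) \<Rightarrow> bool" where
  "morph_colored C col \<longleftrightarrow> category C \<and>
     (\<forall>g f1 f2. g \<in> Mor C \<longrightarrow> composable C f1 f2 \<longrightarrow> col g = col (comp C f1 f2) \<longrightarrow>
        (\<exists>g1 g2. composable C g1 g2 \<and> g = comp C g1 g2 \<and> col g1 = col f1 \<and> col g2 = col f2))"

definition morph_colored_groupoid :: "('o, 'm, 'x) cat_scheme \<Rightarrow> ('m \<Rightarrow> 'c) \<Rightarrow> bool" where
  "morph_colored_groupoid C col \<longleftrightarrow> morph_colored C col \<and> groupoid C"

definition inverse_compatible :: "('o, 'm, 'x) cat_scheme \<Rightarrow> ('m \<Rightarrow> 'c) \<Rightarrow> bool" where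
  "inverse_compatible C col \<longleftrightarrow>
     (\<forall>f\<in>Mor C. \<forall>g\<in>Mor C. col f = col g \<longrightarrow> col (ginv C f) = col (ginv C g))"

definition composable_seq :: "('o, 'm, 'x) cat_scheme \<Rightarrow> 'm list \<Rightarrow> bool" where
  "composable_seq C fs \<longleftrightarrow> fs \<noteq> [] \<and> set fs \<subseteq> Mor C \<and>
     (\<forall>i. Suc i < length fs \<longrightarrow> dom C (fs ! i) = cod C (fs ! Suc i))"

fun comp_list :: "('o, 'm, 'x) cat_scheme \<Rightarrow> 'm list \<Rightarrow> 'm" where
  "comp_list C [] = undefined"
| "comp_list C [f] = f"
| "comp_list C (f # g # fs) = comp C f (comp_list C (g # fs))"

definition I1 :: "('o, 'm, 'x) cat_scheme \<Rightarrow> ('m \<Rightarrow> 'c) \<Rightarrow> 'c set" where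
  "I1 C col = col ` Mor C"

definition rel1 :: "('o, 'm, 'x) cat_scheme \<Rightarrow> ('m \<Rightarrow> 'c) \<Rightarrow> ('c \<times> 'c) set" where
  "rel1 C col = {(col (comp_list C fs), col (comp_list C gs)) | fs gs.
      composable_seq C fs \<and> composable_seq C gs \<and> length fs = length gs \<and>
      (\<forall>i < length fs. col (fs ! i) = col (gs ! i))}"

definition barI1 :: "('o, 'm, 'x) cat_scheme \<Rightarrow> ('m \<Rightarrow> 'c) \<Rightarrow> 'c set set" where
  "barI1 C col = I1 C col // rel1 C col"

definition s1 :: "('o, 'm, 'x) cat_scheme \<Rightarrow> ('m \<Rightarrow> 'c) \<Rightarrow> 'c \<Rightarrow> 'c set" where
  "s1 C col i = rel1 C col `` {i}"

end

theory Submission imports Defs begin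

lemma cs_Nil[simp]: "\<not> composable_seq C []"
  by (simp add: composable_seq_def)

lemma cs_single[simp]: "composable_seq C [f] \<longleftrightarrow> f \<in> Mor C"
  by (simp add: composable_seq_def)

lemma cs_Cons2[simp]: "composable_seq C (f#g#fs) \<longleftrightarrow> f \<in> Mor C \<and> dom C f = cod C g \<and> composable_seq C (g#fs)"
proof
  assume "composable_seq C (f#g#fs)"
  then show "f \<in> Mor C \<and> dom C f = cod C g \<and> composable_seq C (g#fs)"
    unfolding composable_seq_def by force
next
  assume a: "f \<in> Mor C \<and> dom C f = cod C g \<and> composable_seq C (g#fs)"
  show "composable_seq C (f#g#fs)"
    unfolding composable_seq_def
  proof (intro conjI allI impI)
    show "f # g # fs \<noteq> []" by simp
    show "set (f # g # fs) \<subseteq> Mor C" using a unfolding composable_seq_def by auto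
    fix i assume "Suc i < length (f # g # fs)"
    then show "dom C ((f # g # fs) ! i) = cod C ((f # g # fs) ! Suc i)"
      using a unfolding composable_seq_def by (cases i) auto
  qed
qed

lemma cat_comp: "category C \<Longrightarrow> f \<in> Mor C \<Longrightarrow> g \<in> Mor C \<Longrightarrow> dom C f = cod C g \<Longrightarrow>
   comp C f g \<in> Mor C \<and> dom C (comp C f g) = dom C g \<and> cod C (comp C f g) = cod C f"
  unfolding category_def composable_def by blast

lemma cat_ob: "category C \<Longrightarrow> f \<in> Mor C \<Longrightarrow> dom C f \<in> Ob C \<and> cod C f \<in> Ob C"
  unfolding category_def by blast

lemma cat_id: "category C \<Longrightarrow> a \<in> Ob C \<Longrightarrow> ident C a \<in> Mor C \<and> dom C (ident C a) = a \<and> cod C (ident C a) = a"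
  unfolding category_def by blast

lemma cat_idl: "category C \<Longrightarrow> f \<in> Mor C \<Longrightarrow> comp C (ident C (cod C f)) f = f"
  unfolding category_def by blast
lemma cat_idr: "category C \<Longrightarrow> f \<in> Mor C \<Longrightarrow> comp C f (ident C (dom C f)) = f"
  unfolding category_def by blast

lemma cat_assoc: "category C \<Longrightarrow> f \<in> Mor C \<Longrightarrow> g \<in> Mor C \<Longrightarrow> h \<in> Mor C \<Longrightarrow> dom C f = cod C g \<Longrightarrow> dom C g = cod C h \<Longrightarrow>
   comp C (comp C f g) h = comp C f (comp C g h)"
  unfolding category_def composable_def by blast

lemma cl_props: "category C \<Longrightarrow> composable_seq C fs \<Longrightarrow>
  comp_list C fs \<in> Mor C \<and> dom C (comp_list C fs) = dom C (last fs) \<and> cod C (comp_list C fs) = cod C (hd fs)"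
proof (induction C fs rule: comp_list.induct)
  case (3 C f g fs)
  then show ?case using cat_comp[of C f "comp_list C (g#fs)"] by auto
qed auto

lemma cs_append: "xs \<noteq> [] \<Longrightarrow> ys \<noteq> [] \<Longrightarrow> composable_seq C (xs @ ys) \<longleftrightarrow>
   composable_seq C xs \<and> composable_seq C ys \<and> dom C (last xs) = cod C (hd ys)"
proof (induction xs rule: induct_list012)
  case (2 x)
  then show ?case by (cases ys) auto
next
  case (3 x y zs)
  then show ?case by auto
qed auto

lemma cl_append: "category C \<Longrightarrow> composable_seq C xs \<Longrightarrow> composable_seq C ys \<Longrightarrow> dom C (last xs) = cod C (hd ys) \<Longrightarrow>
   comp_list C (xs @ ys) = comp C (comp_list C xs) (comp_list C ys)"
proof (induction xs rule: induct_list012)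
  case (2 x)
  then show ?case by (cases ys) auto
next
  case (3 x y zs)
  have ysne: "ys \<noteq> []" using 3 by (cases ys) auto
  have cs: "composable_seq C ((y#zs) @ ys)" using 3 ysne cs_append[of "y#zs" ys C] by auto
  have e: "comp_list C ((x#y#zs) @ ys) = comp C x (comp_list C ((y#zs) @ ys))" by simp
  have IH: "comp_list C ((y#zs) @ ys) = comp C (comp_list C (y#zs)) (comp_list C ys)"
    using 3(2)[OF 3(3) _ 3(5)] 3(4,6) by (simp del: append_Cons)
  have p1: "comp_list C (y#zs) \<in> Mor C" "cod C (comp_list C (y#zs)) = cod C y"
       "dom C (comp_list C (y#zs)) = dom C (last (y#zs))"
    using cl_props[of C "y#zs"] 3 by auto
  have p2: "comp_list C ys \<in> Mor C" "cod C (comp_list C ys) = cod C (hd ys)"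
    using cl_props[of C ys] 3 by auto
  show ?case unfolding e IH using 3 p1 p2
    using cs by (simp add: cat_assoc del: append_Cons)
qed auto

lemma inv_unique: "category C \<Longrightarrow> f \<in> Mor C \<Longrightarrow> is_inverse C f g \<Longrightarrow> is_inverse C f h \<Longrightarrow> g = h"
proof -
  assume c: "category C" and f: "f \<in> Mor C" and g: "is_inverse C f g" and h: "is_inverse C f h"
  have gM: "g \<in> Mor C" "dom C g = cod C f" "cod C g = dom C f" "comp C g f = ident C (dom C f)"
    using g unfolding is_inverse_def by auto
  have hM: "h \<in> Mor C" "dom C h = cod C f" "cod C h = dom C f" "comp C f h = ident C (cod C f)"
    using h unfolding is_inverse_def by auto
  have "g = comp C g (ident C (cod C f))" using cat_idr[OF c gM(1)] gM(2) by simp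
  also have "\<dots> = comp C g (comp C f h)" using hM by simp
  also have "\<dots> = comp C (comp C g f) h" using cat_assoc[OF c gM(1) f hM(1)] gM hM by simp
  also have "\<dots> = comp C (ident C (cod C h)) h" using gM hM by simp
  also have "\<dots> = h" using cat_idl[OF c hM(1)] .
  finally show ?thesis .
qed

lemma ginv_inv: "groupoid C \<Longrightarrow> f \<in> Mor C \<Longrightarrow> is_inverse C f (ginv C f)"
  unfolding ginv_def groupoid_def
  by (metis inv_unique theI)

lemma ginv_props: "groupoid C \<Longrightarrow> f \<in> Mor C \<Longrightarrow> ginv C f \<in> Mor C \<and> dom C (ginv C f) = cod C f \<and>
   cod C (ginv C f) = dom C f \<and> comp C (ginv C f) f = ident C (dom C f) \<and> comp C f (ginv C f) = ident C (cod C f)"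
  using ginv_inv[of C f] unfolding is_inverse_def by blast

lemma gcat: "groupoid C \<Longrightarrow> category C" unfolding groupoid_def by blast

lemma ginv_eq: "groupoid C \<Longrightarrow> f \<in> Mor C \<Longrightarrow> is_inverse C f g \<Longrightarrow> ginv C f = g"
  using inv_unique ginv_inv gcat by metis

lemma ginv_ginv: "groupoid C \<Longrightarrow> f \<in> Mor C \<Longrightarrow> ginv C (ginv C f) = f"
  apply (rule ginv_eq)
  using ginv_props[of C f] unfolding is_inverse_def by auto

lemma ginv_comp: assumes G: "groupoid C" and f: "f \<in> Mor C" and g: "g \<in> Mor C" and fg: "dom C f = cod C g"
  shows "ginv C (comp C f g) = comp C (ginv C g) (ginv C f)"
proof (rule ginv_eq[OF G])
  have c: "category C" using G gcat by blast
  note F = ginv_props[OF G f] and Gg = ginv_props[OF G g]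
  note fgp = cat_comp[OF c f g fg]
  have igf: "comp C (ginv C g) (ginv C f) \<in> Mor C \<and> dom C (comp C (ginv C g) (ginv C f)) = cod C f
     \<and> cod C (comp C (ginv C g) (ginv C f)) = dom C g"
    using cat_comp[OF c, of "ginv C g" "ginv C f"] F Gg fg by auto
  have idg: "ident C (dom C f) = ident C (cod C g)" using fg by simp
  have e1: "comp C (comp C (ginv C g) (ginv C f)) (comp C f g) = ident C (dom C g)"
  proof -
    have "comp C (comp C (ginv C g) (ginv C f)) (comp C f g) = comp C (ginv C g) (comp C (ginv C f) (comp C f g))"
      using cat_assoc[OF c, of "ginv C g" "ginv C f" "comp C f g"] F Gg fgp fg by auto
    also have "comp C (ginv C f) (comp C f g) = comp C (comp C (ginv C f) f) g"
      using cat_assoc[OF c, of "ginv C f" f g] F f g fg by auto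
    also have "\<dots> = g" using F fg cat_idl[OF c g] by simp
    finally show ?thesis using Gg by simp
  qed
  have e2: "comp C (comp C f g) (comp C (ginv C g) (ginv C f)) = ident C (cod C f)"
  proof -
    have "comp C (comp C f g) (comp C (ginv C g) (ginv C f)) = comp C f (comp C g (comp C (ginv C g) (ginv C f)))"
      using cat_assoc[OF c, of f g "comp C (ginv C g) (ginv C f)"] igf f g fg Gg by auto
    also have "comp C g (comp C (ginv C g) (ginv C f)) = comp C (comp C g (ginv C g)) (ginv C f)"
      using cat_assoc[OF c, of g "ginv C g" "ginv C f"] F Gg g fg by auto
    also have "\<dots> = ginv C f" using Gg fg F cat_idl[OF c, of "ginv C f"] by simp
    finally show ?thesis using F by simp
  qed
  show "comp C f g \<in> Mor C" using fgp by blast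
  show "is_inverse C (comp C f g) (comp C (ginv C g) (ginv C f))"
    unfolding is_inverse_def using igf fgp e1 e2 by auto
qed

lemma inv_seq: "groupoid C \<Longrightarrow> composable_seq C fs \<Longrightarrow>
  composable_seq C (rev (map (ginv C) fs)) \<and> comp_list C (rev (map (ginv C) fs)) = ginv C (comp_list C fs)"
proof (induction C fs rule: comp_list.induct)
  case (2 C f) then show ?case using ginv_props[of C f] by simp
next
  case (3 C f g fs)
  have c: "category C" using 3 gcat by blast
  have IH: "composable_seq C (rev (map (ginv C) (g#fs)))" "comp_list C (rev (map (ginv C) (g#fs))) = ginv C (comp_list C (g#fs))"
    using 3 by auto
  have f: "f \<in> Mor C" "dom C f = cod C g" using 3 by auto
  note P = cl_props[OF c, of "g#fs"]
  have R: "comp_list C (g#fs) \<in> Mor C" "cod C (comp_list C (g#fs)) = cod C g" using P 3 by auto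
  have ne: "rev (map (ginv C) (g#fs)) \<noteq> []" by simp
  have lst: "dom C (last (rev (map (ginv C) (g#fs)))) = dom C (comp_list C (rev (map (ginv C) (g#fs))))"
    using cl_props[OF c IH(1)] by simp
  have dd: "dom C (last (rev (map (ginv C) (g#fs)))) = cod C (hd [ginv C f])"
    using lst IH(2) ginv_props[OF 3(2) R(1)] ginv_props[OF 3(2) f(1)] R f by simp
  have e: "rev (map (ginv C) (f#g#fs)) = rev (map (ginv C) (g#fs)) @ [ginv C f]" by simp
  have cs: "composable_seq C (rev (map (ginv C) (f#g#fs)))"
    unfolding e using cs_append[OF ne, of "[ginv C f]" C] IH(1) dd ginv_props[OF 3(2) f(1)] by simp
  have "comp_list C (rev (map (ginv C) (f#g#fs))) = comp C (ginv C (comp_list C (g#fs))) (ginv C f)"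
    unfolding e using cl_append[OF c IH(1), of "[ginv C f]"] dd ginv_props[OF 3(2) f(1)] IH(2) by simp
  also have "\<dots> = ginv C (comp_list C (f#g#fs))"
    using ginv_comp[OF 3(2) f(1) R(1)] f R by simp
  finally show ?case using cs by simp
qed simp

lemma decomp: "morph_colored C col \<Longrightarrow> composable_seq C fs \<Longrightarrow> h \<in> Mor C \<Longrightarrow> col h = col (comp_list C fs) \<Longrightarrow>
  \<exists>hs. composable_seq C hs \<and> map col hs = map col fs \<and> comp_list C hs = h"
proof (induction C fs arbitrary: h rule: comp_list.induct)
  case (2 C f) then show ?case by (intro exI[of _ "[h]"]) simp
next
  case (3 C f g fs)
  have c: "category C" using 3 morph_colored_def by blast
  note P = cl_props[OF c, of "g#fs"]
  have cp: "composable C f (comp_list C (g#fs))" unfolding composable_def using 3 P by auto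
  obtain h1 h2 where h: "composable C h1 h2" "h = comp C h1 h2" "col h1 = col f" "col h2 = col (comp_list C (g#fs))"
  proof -
    have "\<forall>g f1 f2. g \<in> Mor C \<longrightarrow> composable C f1 f2 \<longrightarrow> col g = col (comp C f1 f2) \<longrightarrow>
        (\<exists>g1 g2. composable C g1 g2 \<and> g = comp C g1 g2 \<and> col g1 = col f1 \<and> col g2 = col f2)"
      using 3(2) unfolding morph_colored_def by blast
    then have "\<exists>g1 g2. composable C g1 g2 \<and> h = comp C g1 g2 \<and> col g1 = col f \<and> col g2 = col (comp_list C (g#fs))"
      using 3(4,5) cp by simp
    then show ?thesis using that by blast
  qed
  obtain hs where hs: "composable_seq C hs" "map col hs = map col (g#fs)" "comp_list C hs = h2"
  proof -
    have "h2 \<in> Mor C" using h(1) unfolding composable_def by blast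
    then show ?thesis using 3(1)[OF 3(2) _ _ h(4)] 3(3) that by auto
  qed
  obtain h' hs' where hs': "hs = h' # hs'" using hs(2) by (cases hs) auto
  have cod: "cod C h2 = cod C h'" using cl_props[OF c hs(1)] hs(3) hs' by simp
  have "composable_seq C (h1 # hs)" unfolding hs' using hs(1) hs' h(1) cod unfolding composable_def by simp
  moreover have "comp_list C (h1 # hs) = h" unfolding hs' using hs(3) hs' h(2) by simp
  ultimately show ?case using hs h by (intro exI[of _ "h1 # hs"]) simp
qed simp

lemma col_inv_map: "inverse_compatible C col \<Longrightarrow> set ts \<subseteq> Mor C \<Longrightarrow> set us \<subseteq> Mor C \<Longrightarrow> map col ts = map col us \<Longrightarrow>
  map (col \<circ> ginv C) ts = map (col \<circ> ginv C) us"
proof (induction ts arbitrary: us)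
  case (Cons t ts)
  then obtain u us' where "us = u # us'" by (cases us) auto
  note uu = this
  have t: "t \<in> Mor C" "set ts \<subseteq> Mor C" and u: "u \<in> Mor C" "set us' \<subseteq> Mor C"
    using Cons.prems(2,3) uu by auto
  have m: "col t = col u" "map col ts = map col us'" using Cons.prems(4) uu by auto
  have "col (ginv C t) = col (ginv C u)" using Cons.prems(1) t u m unfolding inverse_compatible_def by blast
  then show ?case using Cons.IH[OF Cons.prems(1) t(2) u(2) m(2)] uu by simp
qed simp

lemma mc_split: "morph_colored C col \<Longrightarrow> h \<in> Mor C \<Longrightarrow> composable C f1 f2 \<Longrightarrow> col h = col (comp C f1 f2) \<Longrightarrow>
  \<exists>g1 g2. composable C g1 g2 \<and> h = comp C g1 g2 \<and> col g1 = col f1 \<and> col g2 = col f2"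
  unfolding morph_colored_def by blast

lemma transport: assumes M: "morph_colored_groupoid C col" and xs: "composable_seq C xs" and ys: "composable_seq C ys"
  and m: "map col xs = map col ys"
  shows "\<exists>e \<in> Mor C. col e = col (comp_list C ys) \<and> cod C e = cod C (comp_list C xs)"
proof -
  have G: "groupoid C" and MC: "morph_colored C col" using M unfolding morph_colored_groupoid_def by auto
  have c: "category C" using G gcat by blast
  obtain y1 ys' where yy: "ys = y1 # ys'" using ys by (cases ys) auto
  obtain x1 xs' where xx: "xs = x1 # xs'" using xs by (cases xs) auto
  have cx: "cod C (comp_list C xs) = cod C x1" using cl_props[OF c xs] xx by simp
  have x1: "x1 \<in> Mor C" using xs xx unfolding composable_seq_def by auto
  have y1: "y1 \<in> Mor C" using ys yy unfolding composable_seq_def by auto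
  have col1: "col x1 = col y1" using m xx yy by simp
  show ?thesis
  proof (cases ys')
    case Nil
    then have "xs' = []" using m xx yy by simp
    then show ?thesis using Nil xx yy x1 col1 by auto
  next
    case (Cons y2 r)
    define R where "R = comp_list C ys'"
    have csR: "composable_seq C ys'" and d: "dom C y1 = cod C y2" using ys yy Cons by auto
    have R: "R \<in> Mor C" "cod C R = cod C y2" "dom C R = dom C (last ys')" using cl_props[OF c csR] Cons R_def by auto
    have Y: "comp_list C ys = comp C y1 R" using yy Cons R_def by simp
    note Yp = cat_comp[OF c y1 R(1)] 
    note IR = ginv_props[OF G R(1)]
    have "comp C (comp C y1 R) (ginv C R) = comp C y1 (comp C R (ginv C R))"
      using cat_assoc[OF c y1 R(1) IR[THEN conjunct1]] IR R d by simp
    also have "\<dots> = y1" using IR R d cat_idr[OF c y1] by simp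
    finally have e: "comp C (comp C y1 R) (ginv C R) = y1" .
    have cp: "composable C (comp C y1 R) (ginv C R)" unfolding composable_def using Yp IR R d by simp
    obtain e1 e2 where ee: "composable C e1 e2" "x1 = comp C e1 e2" "col e1 = col (comp C y1 R)"
      using mc_split[OF MC x1 cp] col1 e by metis
    have "cod C e1 = cod C x1" using ee cat_comp[OF c, of e1 e2] unfolding composable_def by auto
    moreover have "e1 \<in> Mor C" using ee unfolding composable_def by auto
    ultimately show ?thesis using ee cx Y by auto
  qed
qed

lemma transport_dom: assumes M: "morph_colored_groupoid C col" and IC: "inverse_compatible C col"
  and xs: "composable_seq C xs" and ys: "composable_seq C ys"
  and m: "map col xs = map col ys"
  shows "\<exists>e \<in> Mor C. col e = col (comp_list C ys) \<and> dom C e = dom C (comp_list C xs)"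
proof -
  have G: "groupoid C" using M unfolding morph_colored_groupoid_def by auto
  have c: "category C" using G gcat by blast
  note ix = inv_seq[OF G xs] and iy = inv_seq[OF G ys]
  have "map col (rev (map (ginv C) xs)) = map col (rev (map (ginv C) ys))"
    using col_inv_map[OF IC, of xs ys] xs ys m unfolding composable_seq_def by (simp add: rev_map[symmetric])
  then obtain e where e: "e \<in> Mor C" "col e = col (ginv C (comp_list C ys))" "cod C e = cod C (ginv C (comp_list C xs))"
    using transport[OF M ix[THEN conjunct1] iy[THEN conjunct1]] ix iy by auto
  have X: "comp_list C xs \<in> Mor C" and Yy: "comp_list C ys \<in> Mor C" using cl_props[OF c] xs ys by auto
  have "col (ginv C e) = col (ginv C (ginv C (comp_list C ys)))"
    using IC e ginv_props[OF G Yy] unfolding inverse_compatible_def by blast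
  then have "col (ginv C e) = col (comp_list C ys)" using ginv_ginv[OF G Yy] by simp
  moreover have "dom C (ginv C e) = dom C (comp_list C xs)" using ginv_props[OF G e(1)] ginv_props[OF G X] e by simp
  ultimately show ?thesis using ginv_props[OF G e(1)] by blast
qed

lemma rel1_iff: "(a, b) \<in> rel1 C col \<longleftrightarrow> (\<exists>fs gs. composable_seq C fs \<and> composable_seq C gs \<and>
   map col fs = map col gs \<and> a = col (comp_list C fs) \<and> b = col (comp_list C gs))"
proof -
  have "\<And>fs gs. map col fs = map col gs \<longleftrightarrow> length fs = length gs \<and> (\<forall>i < length fs. col (fs ! i) = col (gs ! i))"
    by (auto simp: list_eq_iff_nth_eq)
  then show ?thesis unfolding rel1_def by blast
qed

lemma sandwich: assumes G: "groupoid C" and A: "composable_seq C A" and B: "composable_seq C B" and Z: "composable_seq C Z"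
  and d1: "dom C (comp_list C A) = dom C (comp_list C B)" and d2: "cod C (comp_list C B) = cod C (comp_list C Z)"
  shows "composable_seq C (A @ rev (map (ginv C) B) @ Z) \<and>
    comp_list C (A @ rev (map (ginv C) B) @ Z) = comp C (comp_list C A) (comp C (ginv C (comp_list C B)) (comp_list C Z))"
proof -
  have c: "category C" using G gcat by blast
  note IB = inv_seq[OF G B]
  note PA = cl_props[OF c A] and PB = cl_props[OF c B] and PZ = cl_props[OF c Z] and PI = cl_props[OF c IB[THEN conjunct1]]
  note GB = ginv_props[OF G PB[THEN conjunct1]]
  have ne: "A \<noteq> []" "rev (map (ginv C) B) \<noteq> []" "Z \<noteq> []" using A B Z unfolding composable_seq_def by auto
  have dIZ: "dom C (last (rev (map (ginv C) B))) = cod C (hd Z)" using PI PZ IB GB d2 by simp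
  have cs1: "composable_seq C (rev (map (ginv C) B) @ Z)" using cs_append[OF ne(2,3), of C] IB dIZ Z by blast
  have e1: "comp_list C (rev (map (ginv C) B) @ Z) = comp C (ginv C (comp_list C B)) (comp_list C Z)"
    using cl_append[OF c IB[THEN conjunct1] Z dIZ] IB by simp
  have hd1: "hd (rev (map (ginv C) B) @ Z) = hd (rev (map (ginv C) B))" using ne by simp
  have dA: "dom C (last A) = cod C (hd (rev (map (ginv C) B) @ Z))" using hd1 PA PI IB GB d1 by simp
  have ne2: "rev (map (ginv C) B) @ Z \<noteq> []" using ne by simp
  have "composable_seq C (A @ rev (map (ginv C) B) @ Z)" using cs_append[OF ne(1) ne2, of C] cs1 A dA by blast
  then show ?thesis using cl_append[OF c A cs1 dA] e1 by simp
qed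

lemma rel1_trans: assumes M: "morph_colored_groupoid C col" and IC: "inverse_compatible C col"
  and pq: "(p, q) \<in> rel1 C col" and qr: "(q, r) \<in> rel1 C col"
  shows "(p, r) \<in> rel1 C col"
proof -
  have G: "groupoid C" and MC: "morph_colored C col" using M unfolding morph_colored_groupoid_def by auto
  have c: "category C" using G gcat by blast
  obtain xs ys where xy: "composable_seq C xs" "composable_seq C ys" "map col xs = map col ys"
    "p = col (comp_list C xs)" "q = col (comp_list C ys)" using pq rel1_iff by metis
  obtain ys2 ws where yw: "composable_seq C ys2" "composable_seq C ws" "map col ys2 = map col ws"
    "q = col (comp_list C ys2)" "r = col (comp_list C ws)" using qr rel1_iff by metis
  obtain t where t: "t \<in> Mor C" "col t = q" "cod C t = cod C (comp_list C xs)"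
    using transport[OF M xy(1,2,3)] xy(5) by auto
  obtain ts where ts: "composable_seq C ts" "map col ts = map col ys" "comp_list C ts = t"
    using decomp[OF MC xy(2) t(1)] t xy by auto
  obtain ts' where ts': "composable_seq C ts'" "map col ts' = map col ys2" "comp_list C ts' = t"
    using decomp[OF MC yw(1) t(1)] t yw by auto
  obtain u where u: "u \<in> Mor C" "col u = q" "dom C u = dom C (comp_list C ws)"
    using transport_dom[OF M IC yw(2,1) yw(3)[symmetric]] yw(4) by auto
  obtain us where us: "composable_seq C us" "map col us = map col ys" "comp_list C us = u"
    using decomp[OF MC xy(2) u(1)] u xy by auto
  have X: "comp_list C xs \<in> Mor C" and W: "comp_list C ws \<in> Mor C" using cl_props[OF c] xy yw by auto
  note Gt = ginv_props[OF G t(1)] and Gu = ginv_props[OF G u(1)]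
  have S1: "composable_seq C (ts' @ rev (map (ginv C) ts) @ xs)"
       "comp_list C (ts' @ rev (map (ginv C) ts) @ xs) = comp C t (comp C (ginv C t) (comp_list C xs))"
    using sandwich[OF G ts'(1) ts(1) xy(1)] ts ts' t by auto
  have "comp C t (comp C (ginv C t) (comp_list C xs)) = comp C (comp C t (ginv C t)) (comp_list C xs)"
    using cat_assoc[OF c t(1) _ X, of "ginv C t"] Gt t by simp
  also have "\<dots> = comp_list C xs" using Gt t cat_idl[OF c X] by simp
  finally have S1': "comp_list C (ts' @ rev (map (ginv C) ts) @ xs) = comp_list C xs" using S1 by simp
  have S2: "composable_seq C (ws @ rev (map (ginv C) us) @ us)"
       "comp_list C (ws @ rev (map (ginv C) us) @ us) = comp C (comp_list C ws) (comp C (ginv C u) u)"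
    using sandwich[OF G yw(2) us(1) us(1)] us u by auto
  have S2': "comp_list C (ws @ rev (map (ginv C) us) @ us) = comp_list C ws"
    using S2 Gu u cat_idr[OF c W] by simp
  have "map (col \<circ> ginv C) ts = map (col \<circ> ginv C) us"
    using col_inv_map[OF IC, of ts us] ts us unfolding composable_seq_def by simp
  then have cm: "map col (ts' @ rev (map (ginv C) ts) @ xs) = map col (ws @ rev (map (ginv C) us) @ us)"
    using ts' yw(3) xy(3) us(2) by (simp add: rev_map[symmetric])
  show ?thesis unfolding rel1_iff
    apply (rule exI[of _ "ts' @ rev (map (ginv C) ts) @ xs"])
    apply (rule exI[of _ "ws @ rev (map (ginv C) us) @ us"])
    using S1 S2 S1' S2' cm xy(4) yw(5) by simp
qed

lemma cs_snoc: "composable_seq C (xs @ [x]) \<longleftrightarrow> x \<in> Mor C \<and> (xs = [] \<or> composable_seq C xs \<and> dom C (last xs) = cod C x)"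
proof (cases "xs = []")
  case True then show ?thesis by simp
next
  case False
  have "composable_seq C (xs @ [x]) \<longleftrightarrow> composable_seq C xs \<and> composable_seq C [x] \<and> dom C (last xs) = cod C (hd [x])"
    using cs_append[OF False, of "[x]" C] by simp
  then show ?thesis using False by auto
qed

lemma cl_snoc: assumes c: "category C" and cs: "composable_seq C (xs @ [x])" and y: "y \<in> Mor C" and d: "dom C x = cod C y"
  shows "composable_seq C (xs @ [comp C x y]) \<and> comp_list C (xs @ [comp C x y]) = comp C (comp_list C (xs @ [x])) y"
proof -
  have x: "x \<in> Mor C" using cs_snoc[THEN iffD1, OF cs] by blast
  note P = cat_comp[OF c x y d]
  show ?thesis
  proof (cases "xs = []")
    case True then show ?thesis using P by simp
  next
    case False
    then have xs: "composable_seq C xs" "dom C (last xs) = cod C x" using cs_snoc[THEN iffD1, OF cs] by blast+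
    have cs2: "composable_seq C (xs @ [comp C x y])" by (rule cs_snoc[THEN iffD2]) (use xs P in simp)
    have e1: "comp_list C (xs @ [comp C x y]) = comp C (comp_list C xs) (comp C x y)"
      using cl_append[OF c xs(1), of "[comp C x y]"] P xs by simp
    have e2: "comp_list C (xs @ [x]) = comp C (comp_list C xs) x"
      using cl_append[OF c xs(1), of "[x]"] x xs by simp
    note PX = cl_props[OF c xs(1)]
    have "comp C (comp C (comp_list C xs) x) y = comp C (comp_list C xs) (comp C x y)"
      using cat_assoc[OF c _ x y] PX xs d by simp
    then show ?thesis using cs2 e1 e2 by simp
  qed
qed

lemma rel1_sym: "(a, b) \<in> rel1 C col \<Longrightarrow> (b, a) \<in> rel1 C col"
proof -
  assume "(a, b) \<in> rel1 C col"
  then obtain fs gs where "composable_seq C fs" "composable_seq C gs" "map col fs = map col gs"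
    "a = col (comp_list C fs)" "b = col (comp_list C gs)" unfolding rel1_iff by blast
  then show ?thesis unfolding rel1_iff by (intro exI[of _ gs] exI[of _ fs]) simp
qed

lemma rel1_refl: "f \<in> Mor C \<Longrightarrow> (col f, col f) \<in> rel1 C col"
  unfolding rel1_iff by (intro exI[of _ "[f]"]) simp

lemma s1_eq: assumes M: "morph_colored_groupoid C col" and IC: "inverse_compatible C col"
  and ab: "(a, b) \<in> rel1 C col" shows "s1 C col a = s1 C col b"
proof -
  have ba: "(b, a) \<in> rel1 C col" using rel1_sym[OF ab] .
  show ?thesis unfolding s1_def
  proof (rule set_eqI)
    fix x
    show "x \<in> rel1 C col `` {a} \<longleftrightarrow> x \<in> rel1 C col `` {b}"
      using rel1_trans[OF M IC ab, of x] rel1_trans[OF M IC ba, of x] by auto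
  qed
qed

theorem mainTheorem6:
  fixes C :: "('o, 'm) cat" and col :: "'m \<Rightarrow> 'c"
  assumes "morph_colored_groupoid C col"
    and "inverse_compatible C col"
  shows "morph_colored C (s1 C col \<circ> col)"
proof -
  note M = assms(1) and IC = assms(2)
  have G: "groupoid C" and MC: "morph_colored C col" using M unfolding morph_colored_groupoid_def by auto
  have c: "category C" using G gcat by blast
  have main: "\<exists>g1 g2. composable C g1 g2 \<and> g = comp C g1 g2 \<and> s1 C col (col g1) = s1 C col (col f1) \<and> s1 C col (col g2) = s1 C col (col f2)"
    if g: "g \<in> Mor C" and f12: "composable C f1 f2" and sg: "s1 C col (col g) = s1 C col (col (comp C f1 f2))" for g f1 f2
  proof -
    have f: "f1 \<in> Mor C" "f2 \<in> Mor C" "dom C f1 = cod C f2" using f12 unfolding composable_def by auto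
    define F where "F = comp C f1 f2"
    note FP = cat_comp[OF c f, folded F_def]
    have "col g \<in> s1 C col (col g)" unfolding s1_def using rel1_refl[OF g] by blast
    then have "(col F, col g) \<in> rel1 C col" using sg unfolding s1_def F_def by simp
    then obtain fs gs where fg: "composable_seq C fs" "composable_seq C gs" "map col fs = map col gs"
      "col F = col (comp_list C fs)" "col g = col (comp_list C gs)" unfolding rel1_iff by metis
    obtain ks where ks: "composable_seq C ks" "map col ks = map col fs" "comp_list C ks = F"
      using decomp[OF MC fg(1) _ fg(4)] FP by blast
    obtain hs where hs: "composable_seq C hs" "map col hs = map col gs" "comp_list C hs = g"
      using decomp[OF MC fg(2) g fg(5)] by blast
    obtain ks0 kl where kk: "ks = ks0 @ [kl]" using ks(1) by (cases ks rule: rev_cases) auto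
    obtain hs0 hl where hh: "hs = hs0 @ [hl]" using hs(1) by (cases hs rule: rev_cases) auto
    have "map col ks0 @ [col kl] = map col hs0 @ [col hl]" using ks(2) hs(2) fg(3) kk hh by simp
    then have mm: "map col ks0 = map col hs0" "col kl = col hl" by simp_all
    have kl: "kl \<in> Mor C" and hl: "hl \<in> Mor C" using cs_snoc[THEN iffD1, OF ks(1)[unfolded kk]] cs_snoc[THEN iffD1, OF hs(1)[unfolded hh]] by blast+
    have dkl: "dom C kl = dom C f2" using cl_props[OF c ks(1)] ks(3) kk FP by simp
    note I2 = ginv_props[OF G f(2)]
    define a where "a = comp C kl (ginv C f2)"
    have aP: "a \<in> Mor C" "dom C a = cod C f2" "cod C a = cod C kl"
      using cat_comp[OF c kl, of "ginv C f2"] I2 dkl unfolding a_def by auto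
    have "comp C a f2 = comp C kl (comp C (ginv C f2) f2)"
      unfolding a_def using cat_assoc[OF c kl _ f(2), of "ginv C f2"] I2 dkl by simp
    also have "\<dots> = kl" using I2 dkl cat_idr[OF c kl] by simp
    finally have af: "comp C a f2 = kl" .
    have cpa: "composable C a f2" unfolding composable_def using aP f by simp
    obtain b1 b2 where bb: "composable C b1 b2" "hl = comp C b1 b2" "col b1 = col a" "col b2 = col f2"
      using mc_split[OF MC hl cpa] af mm(2) by metis
    have b: "b1 \<in> Mor C" "b2 \<in> Mor C" "dom C b1 = cod C b2" using bb(1) unfolding composable_def by auto
    have codb1: "cod C b1 = cod C hl" using cat_comp[OF c b] bb(2) by simp
    have csb1: "composable_seq C (hs0 @ [b1])" using cs_snoc[THEN iffD1, OF hs(1)[unfolded hh]] b codb1 by (intro cs_snoc[THEN iffD2]) simp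
    have csa: "composable_seq C (ks0 @ [a])" using cs_snoc[THEN iffD1, OF ks(1)[unfolded kk]] aP by (intro cs_snoc[THEN iffD2]) simp
    define g1 where "g1 = comp_list C (hs0 @ [b1])"
    have gg: "g = comp C g1 b2" using cl_snoc[OF c csb1 b(2) b(3)] hs(3) hh bb(2) g1_def by simp
    have g1P: "g1 \<in> Mor C" "dom C g1 = dom C b1" using cl_props[OF c csb1] g1_def by auto
    have "comp_list C (ks0 @ [a]) = comp C F (ginv C f2)"
    proof -
      have dk2: "dom C kl = cod C (ginv C f2)" using I2 dkl by simp
      have i2: "ginv C f2 \<in> Mor C" using I2 by blast
      show ?thesis using cl_snoc[OF c ks(1)[unfolded kk] i2 dk2] ks(3) kk a_def by simp
    qed
    also have "\<dots> = f1"
    proof -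
      have "comp C F (ginv C f2) = comp C f1 (comp C f2 (ginv C f2))"
        unfolding F_def using cat_assoc[OF c f(1) f(2), of "ginv C f2"] f I2 by simp
      also have "\<dots> = f1" using I2 f cat_idr[OF c f(1)] by simp
      finally show ?thesis .
    qed
    finally have f1e: "comp_list C (ks0 @ [a]) = f1" .
    have "(col g1, col f1) \<in> rel1 C col"
      unfolding rel1_iff using csb1 csa f1e g1_def mm(1) bb(3) by (intro exI[of _ "hs0 @ [b1]"] exI[of _ "ks0 @ [a]"]) simp
    then have "s1 C col (col g1) = s1 C col (col f1)" using s1_eq[OF M IC] by blast
    moreover have "composable C g1 b2" unfolding composable_def using g1P b by simp
    ultimately show ?thesis using gg bb(4) by (intro exI[of _ g1] exI[of _ b2]) simp
  qed
  show ?thesis unfolding morph_colored_def using c main by simp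
qed

end
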